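(* For every $\eta\in\mathcal{L}$, $c_\pi(\eta)\in[-B^{1/(1+\epsilon)},\,B^{1/(1+\epsilon)}(1-\pi)^{-1/(1+\epsilon)}]$ and $x_\pi(\eta)\in[-B^{1/(1+\epsilon)}\pi^{-1/(1+\epsilon)},\,B^{1/(1+\epsilon)}(1-\pi)^{-1/(1+\epsilon)}]$.
   Context: $\pi\in(0,1)$, $\epsilon>0$, $B>0$. $\mathcal{L}=\{\eta\in\mathcal{P}(\mathbb{R}):\mathbb{E}_\eta|X|^{1+\epsilon}\le B\}$. $F_\eta(x)=\eta((-\infty,x])$; value-at-risk $x_\pi(\eta)=\min\{z\in\mathbb{R}:F_\eta(z)\ge\pi\}$; conditional value-at-risk $c_\pi(\eta)=\frac{F_\eta(x_\pi(\eta))-\pi}{1-\pi}x_\pi(\eta)+\frac{1}{1-\pi}\int_{(x_\pi(\eta),\infty)}y\,dF_\eta(y)$. *)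

theory Defs
  imports "HOL-Probability.Probability"
begin

definition moment_class :: "real \<Rightarrow> real \<Rightarrow> real measure set" where
  "moment_class eps B = {\<eta>. prob_space \<eta> \<and> sets \<eta> = sets borel \<and>
      (\<integral>\<^sup>+ x. ennreal (\<bar>x\<bar> powr (1 + eps)) \<partial>\<eta>) \<le> ennreal B}"

definition cdf_of :: "real measure \<Rightarrow> real \<Rightarrow> real" where
  "cdf_of \<eta> x = measure \<eta> {..x}"

text \<open>Value-at-risk: the minimum of the (nonempty, closed, bounded-below) set
  of z with F(z) >= pi, written as its infimum.\<close>
definition VaR :: "real \<Rightarrow> real measure \<Rightarrow> real" where
  "VaR p \<eta> = Inf {z. cdf_of \<eta> z \<ge> p}"

definition CVaR :: "real \<Rightarrow> real measure \<Rightarrow> real" where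
  "CVaR p \<eta> = (cdf_of \<eta> (VaR p \<eta>) - p) / (1 - p) * VaR p \<eta>
      + 1 / (1 - p) * (\<integral>y\<in>{VaR p \<eta><..}. y \<partial>\<eta>)"

end

theory Submission
  imports Defs
begin

lemma young_int:
  fixes M :: "real measure" and w :: "real \<Rightarrow> real" and q K W :: real
  assumes q: "q > 1" and K: "K > 0" and W: "W > 0"
    and i1: "integrable M (\<lambda>y. \<bar>y\<bar> powr q * w y)"
    and i2: "integrable M (\<lambda>y. \<bar>y\<bar> * w y)" and i3: "integrable M w"
    and wnn: "\<And>y. w y \<ge> 0"
    and hK: "(\<integral>y. \<bar>y\<bar> powr q * w y \<partial>M) \<le> K" and hW: "(\<integral>y. w y \<partial>M) = W"
  shows "(\<integral>y. \<bar>y\<bar> * w y \<partial>M) \<le> K powr (1/q) * W powr (1 - 1/q)"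
proof -
  define r where "r = q / (q - 1)"
  have r1: "r > 1" using q by (simp add: r_def)
  have qr: "1/q + 1/r = 1" using q by (simp add: r_def field_simps)
  define s where "s = K powr (1/q)"
  define t where "t = W powr (-1/r)"
  have s0: "s > 0" using K by (simp add: s_def)
  have t0: "t > 0" using W by (simp add: t_def)
  have spq: "s powr q = K" using K q by (simp add: s_def powr_powr)
  have tpr: "t powr r = 1 / W" using W r1 by (simp add: t_def powr_powr powr_minus_divide powr_divide)
  have pw: "\<bar>y\<bar> * w y * (t/s) \<le> (\<bar>y\<bar> powr q * w y) / (q*K) + w y / (r*W)" for y
  proof -
    have "(\<bar>y\<bar>/s) * t \<le> (\<bar>y\<bar>/s) powr q / q + t powr r / r"
      by (rule Youngs_inequality) (use q r1 qr s0 t0 in auto)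
    also have "(\<bar>y\<bar>/s) powr q = \<bar>y\<bar> powr q / K"
      using s0 by (simp add: powr_divide spq)
    finally have "(\<bar>y\<bar>/s) * t \<le> \<bar>y\<bar> powr q / K / q + 1 / W / r" by (simp add: tpr)
    from mult_right_mono[OF this wnn[of y]] show ?thesis
      by (simp add: field_simps)
  qed
  have "(\<integral>y. \<bar>y\<bar> * w y * (t/s) \<partial>M) \<le> (\<integral>y. (\<bar>y\<bar> powr q * w y) / (q*K) + w y / (r*W) \<partial>M)"
    by (rule integral_mono) (use i1 i2 i3 pw in auto)
  also have "\<dots> = (\<integral>y. \<bar>y\<bar> powr q * w y \<partial>M) / (q*K) + W / (r*W)"
    using i1 i3 hW by (simp add: integral_add)
  also have "\<dots> \<le> K / (q*K) + W/(r*W)"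
    using hK q K by (intro add_right_mono divide_right_mono) auto
  also have "\<dots> = 1" using K W qr by simp
  finally have "(\<integral>y. \<bar>y\<bar> * w y \<partial>M) * (t/s) \<le> 1" by simp
  hence "(\<integral>y. \<bar>y\<bar> * w y \<partial>M) \<le> s / t" using s0 t0 by (simp add: field_simps)
  also have "s / t = K powr (1/q) * W powr (1 - 1/q)"
  proof -
    have "1 - 1/q = 1/r" using qr by simp
    thus ?thesis using W by (simp add: s_def t_def powr_minus_divide)
  qed
  finally show ?thesis .
qed

theorem lemma1:
  fixes p eps B :: real and \<eta> :: "real measure"
  assumes "0 < p" "p < 1" "eps > 0" "B > 0"
    and "\<eta> \<in> moment_class eps B"
  shows "CVaR p \<eta> \<in> {- (B powr (1 / (1 + eps))) ..
                        B powr (1 / (1 + eps)) * (1 - p) powr (- 1 / (1 + eps))}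
       \<and> VaR p \<eta> \<in> {- (B powr (1 / (1 + eps))) * p powr (- 1 / (1 + eps)) ..
                        B powr (1 / (1 + eps)) * (1 - p) powr (- 1 / (1 + eps))}"
proof -
  note p0 = assms(1) and p1 = assms(2) and e0 = assms(3) and B0 = assms(4)
  have ps: "prob_space \<eta>" and sets_eq[measurable_cong]: "sets \<eta> = sets borel"
    and mom: "(\<integral>\<^sup>+ x. ennreal (\<bar>x\<bar> powr (1 + eps)) \<partial>\<eta>) \<le> ennreal B"
    using assms(5) by (auto simp: moment_class_def)
  interpret real_distribution \<eta> using ps sets_eq by (simp add: real_distribution_def real_distribution_axioms_def)
  define q where "q = 1 + eps"
  have q1: "q > 1" using e0 by (simp add: q_def)
  define C where "C = B powr (1/q)"
  have C0: "C > 0" using B0 by (simp add: C_def)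
  have Cq: "C powr q = B" using B0 q1 by (simp add: C_def powr_powr)
  have cdf_eq: "cdf_of \<eta> = cdf \<eta>" by (rule ext) (simp add: cdf_of_def cdf_def)
  have sp[simp]: "space \<eta> = UNIV" by simp
  have meas_q: "(\<lambda>y. \<bar>y\<bar> powr q) \<in> borel_measurable \<eta>" by measurable
  have intq: "integrable \<eta> (\<lambda>y. \<bar>y\<bar> powr q)"
  proof (rule integrableI_bounded)
    show "(\<integral>\<^sup>+ x. ennreal (norm (\<bar>x\<bar> powr q)) \<partial>\<eta>) < \<infinity>"
      using mom by (simp add: q_def) (meson ennreal_less_top le_less_trans)
  qed (rule meas_q)
  have intqB: "(\<integral>y. \<bar>y\<bar> powr q \<partial>\<eta>) \<le> B"
  proof -
    have "ennreal (\<integral>y. \<bar>y\<bar> powr q \<partial>\<eta>) = (\<integral>\<^sup>+ x. ennreal (\<bar>x\<bar> powr q) \<partial>\<eta>)"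
      by (rule nn_integral_eq_integral[symmetric]) (use intq in auto)
    also have "\<dots> \<le> ennreal B" using mom by (simp add: q_def)
    finally show ?thesis using B0 by (simp add: ennreal_le_iff)
  qed
  have int1: "integrable \<eta> (\<lambda>y. y)"
  proof (rule Bochner_Integration.integrable_bound[where f="\<lambda>y. 1 + \<bar>y\<bar> powr q"])
    show "integrable \<eta> (\<lambda>y. 1 + \<bar>y\<bar> powr q)" using intq by simp
    show "AE x in \<eta>. norm x \<le> norm (1 + \<bar>x\<bar> powr q)"
    proof (rule AE_I2)
      fix x :: real
      have "\<bar>x\<bar> \<le> 1 + \<bar>x\<bar> powr q"
      proof (cases "\<bar>x\<bar> \<le> 1")
        case True thus ?thesis using powr_ge_zero[of "\<bar>x\<bar>" q] by linarith
      next
        case False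
        hence "\<bar>x\<bar> powr 1 \<le> \<bar>x\<bar> powr q" using q1 by (intro powr_mono) auto
        thus ?thesis using False by simp
      qed
      thus "norm x \<le> norm (1 + \<bar>x\<bar> powr q)" by simp
    qed
  qed simp
  have markov: "measure \<eta> {y. t \<le> \<bar>y\<bar>} \<le> B / t powr q" if t0: "t > 0" for t
  proof -
    have "measure \<eta> {x\<in>space \<eta>. t powr q \<le> \<bar>x\<bar> powr q} \<le> (\<integral>x. \<bar>x\<bar> powr q \<partial>\<eta>) / t powr q"
      by (rule integral_Markov_inequality_measure[where A=UNIV]) (use intq t0 in auto)
    also have "{x\<in>space \<eta>. t powr q \<le> \<bar>x\<bar> powr q} = {y. t \<le> \<bar>y\<bar>}"
    proof -
      have "t powr q \<le> \<bar>x\<bar> powr q \<longleftrightarrow> t \<le> \<bar>x\<bar>" for x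
      proof
        assume h: "t powr q \<le> \<bar>x\<bar> powr q"
        show "t \<le> \<bar>x\<bar>"
        proof (rule ccontr)
          assume "\<not> t \<le> \<bar>x\<bar>"
          hence "\<bar>x\<bar> powr q < t powr q" using q1 by (intro powr_less_mono2) auto
          thus False using h by simp
        qed
      next
        assume "t \<le> \<bar>x\<bar>"
        thus "t powr q \<le> \<bar>x\<bar> powr q" using q1 t0 by (intro powr_mono2) auto
      qed
      thus ?thesis by auto
    qed
    also have "(\<integral>x. \<bar>x\<bar> powr q \<partial>\<eta>) / t powr q \<le> B / t powr q"
      using intqB t0 by (simp add: divide_right_mono)
    finally show ?thesis by simp
  qed

  define Ub where "Ub = C * (1 - p) powr (- 1 / q)"
  define Lb where "Lb = - C * p powr (- 1 / q)"
  have Ub0: "Ub > 0" using C0 p1 by (simp add: Ub_def)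
  have Lb0: "Lb < 0" using C0 p0 by (simp add: Lb_def)
  have Ubq: "Ub powr q = B / (1 - p)"
    using C0 p1 q1 by (simp add: Ub_def powr_mult Cq powr_powr powr_minus_divide powr_divide)
  have Lbq: "(- Lb) powr q = B / p"
    using C0 p0 q1 by (simp add: Lb_def powr_mult Cq powr_powr powr_minus_divide powr_divide)
  have up: "cdf \<eta> z > p" if z: "z > Ub" for z
  proof -
    have z0: "z > 0" using z Ub0 by simp
    have "Ub powr q < z powr q" using z Ub0 q1 by (intro powr_less_mono2) auto
    hence "B / (1 - p) < z powr q" by (simp add: Ubq)
    hence lt: "B / z powr q < 1 - p" using p1 z0 B0 by (simp add: field_simps)
    have "measure \<eta> {z<..} \<le> measure \<eta> {y. z \<le> \<bar>y\<bar>}"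
      by (intro finite_measure_mono) auto
    also have "\<dots> \<le> B / z powr q" by (rule markov[OF z0])
    finally have "measure \<eta> {z<..} < 1 - p" using lt by simp
    moreover have "measure \<eta> {z<..} = 1 - cdf \<eta> z"
    proof -
      have "{z<..} = space \<eta> - {..z}" by auto
      thus ?thesis using prob_compl[of "{..z}"] by (simp add: cdf_def)
    qed
    ultimately show ?thesis by simp
  qed
  have lo: "z \<ge> Lb" if z: "cdf \<eta> z \<ge> p" for z
  proof (rule ccontr)
    assume "\<not> z \<ge> Lb"
    hence zl: "- z > - Lb" by simp
    have "(- Lb) powr q < (- z) powr q" using zl Lb0 q1 by (intro powr_less_mono2) auto
    hence "B / p < (- z) powr q" by (simp add: Lbq)
    hence lt: "B / (- z) powr q < p" using p0 zl Lb0 B0 by (simp add: field_simps)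
    have "cdf \<eta> z \<le> measure \<eta> {y. - z \<le> \<bar>y\<bar>}"
      unfolding cdf_def by (intro finite_measure_mono) auto
    also have "\<dots> \<le> B / (- z) powr q" by (rule markov) (use zl Lb0 in simp)
    finally show False using lt z by simp
  qed
  define S where "S = {z. cdf \<eta> z \<ge> p}"
  define x where "x = VaR p \<eta>"
  have x_def': "x = Inf S" by (simp add: x_def VaR_def S_def cdf_eq)
  have Sne: "S \<noteq> {}" using up[of "Ub + 1"] by (auto simp: S_def intro!: less_imp_le)
  have Sbdd: "bdd_below S" using lo by (auto simp: S_def bdd_below_def)
  have xLb: "x \<ge> Lb" unfolding x_def' by (rule cInf_greatest[OF Sne]) (auto simp: S_def lo)
  have xUb: "x \<le> Ub"
  proof (rule ccontr)
    assume "\<not> x \<le> Ub"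
    hence "(x + Ub)/2 \<in> S" using up[of "(x + Ub)/2"] by (auto simp: S_def)
    hence "x \<le> (x + Ub)/2" unfolding x_def' by (rule cInf_lower[OF _ Sbdd])
    thus False using \<open>\<not> x \<le> Ub\<close> by simp
  qed
  have VaR_part: "VaR p \<eta> \<in> {- (B powr (1 / (1 + eps))) * p powr (- 1 / (1 + eps)) ..
                        B powr (1 / (1 + eps)) * (1 - p) powr (- 1 / (1 + eps))}"
    using xLb xUb by (simp add: x_def Lb_def Ub_def C_def q_def)

  have Fx: "cdf \<eta> x \<ge> p"
  proof -
    have "(cdf \<eta> \<longlongrightarrow> cdf \<eta> x) (at_right x)"
      using cdf_is_right_cont[of x] by (simp add: continuous_within)
    moreover have "eventually (\<lambda>z. cdf \<eta> z \<ge> p) (at_right x)"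
    proof (rule eventually_at_rightI[where b="x+1"])
      fix z assume "z \<in> {x<..<x+1}"
      hence "z > Inf S" by (simp add: x_def')
      then obtain s where "s \<in> S" "s < z" using cInf_lessD[OF Sne] by blast
      thus "cdf \<eta> z \<ge> p" using cdf_nondecreasing[of s z] by (auto simp: S_def)
    qed simp
    ultimately show ?thesis
      by (intro tendsto_lowerbound) (auto simp: trivial_limit_at_right_real)
  qed
  have Fl: "measure \<eta> {..<x} \<le> p"
  proof -
    have "eventually (\<lambda>z. cdf \<eta> z \<le> p) (at_left x)"
    proof (rule eventually_at_leftI[where a="x-1"])
      fix z assume "z \<in> {x-1<..<x}"
      hence "z < Inf S" by (simp add: x_def')
      hence "z \<notin> S" using cInf_lower[OF _ Sbdd, of z] by auto
      thus "cdf \<eta> z \<le> p" by (simp add: S_def)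
    qed simp
    thus ?thesis using cdf_at_left[of x]
      by (intro tendsto_upperbound) (auto simp: trivial_limit_at_left_real)
  qed
  have Fsplit: "cdf \<eta> x = measure \<eta> {..<x} + measure \<eta> {x}"
  proof -
    have "{..x} = {..<x} \<union> {x}" by auto
    hence "measure \<eta> {..x} = measure \<eta> ({..<x} \<union> {x})" by simp
    also have "\<dots> = measure \<eta> {..<x} + measure \<eta> {x}"
      by (rule finite_measure_Union) auto
    finally show ?thesis by (simp add: cdf_def)
  qed
  define a where "a = cdf \<eta> x - p"
  define P1 where "P1 = measure \<eta> {x}"
  have a0: "a \<ge> 0" using Fx by (simp add: a_def)
  have aP: "a \<le> P1" using Fsplit Fl by (simp add: a_def P1_def)
  define \<alpha> where "\<alpha> = (if P1 = 0 then 0 else a / P1)"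
  have \<alpha>P: "\<alpha> * P1 = a" using a0 aP by (auto simp: \<alpha>_def)
  have \<alpha>0: "\<alpha> \<ge> 0" using a0 aP by (auto simp: \<alpha>_def)
  have \<alpha>1: "\<alpha> \<le> 1" using a0 aP by (auto simp: \<alpha>_def field_simps)
  define w where "w y = indicator {x<..} y + \<alpha> * indicator {x} y" for y :: real
  have w0: "w y \<ge> 0" for y using \<alpha>0 by (simp add: w_def)
  have w1: "w y \<le> 1" for y using \<alpha>0 \<alpha>1 by (simp add: w_def indicator_def)
  have wmeas: "w \<in> borel_measurable \<eta>" unfolding w_def by measurable
  have intI1: "integrable \<eta> (indicator {x<..} :: real \<Rightarrow> real)"
    by (rule integrable_real_indicator) (auto simp: less_top[symmetric])
  have intI2: "integrable \<eta> (indicator {x} :: real \<Rightarrow> real)"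
    by (rule integrable_real_indicator) (auto simp: less_top[symmetric])
  have intw: "integrable \<eta> w" unfolding w_def using intI1 intI2 by simp
  have Pgt: "measure \<eta> {x<..} = 1 - cdf \<eta> x"
  proof -
    have "{x<..} = space \<eta> - {..x}" by auto
    thus ?thesis using prob_compl[of "{..x}"] by (simp add: cdf_def)
  qed
  have intw_val: "(\<integral>y. w y \<partial>\<eta>) = 1 - p"
  proof -
    have "(\<integral>y. w y \<partial>\<eta>) = measure \<eta> {x<..} + \<alpha> * measure \<eta> {x}"
      unfolding w_def using intI1 intI2 by simp
    thus ?thesis using Pgt \<alpha>P by (simp add: a_def P1_def)
  qed
  have intyw: "integrable \<eta> (\<lambda>y. y * w y)"
    by (rule Bochner_Integration.integrable_bound[OF int1]) (use w0 w1 wmeas in \<open>auto simp: abs_mult intro!: mult_left_le\<close>)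
  have intayw: "integrable \<eta> (\<lambda>y. \<bar>y\<bar> * w y)"
    by (rule Bochner_Integration.integrable_bound[OF int1]) (use w0 w1 wmeas in \<open>auto simp: abs_mult intro!: mult_left_le\<close>)
  have intqw: "integrable \<eta> (\<lambda>y. \<bar>y\<bar> powr q * w y)"
    by (rule Bochner_Integration.integrable_bound[OF intq]) (use w0 w1 wmeas in \<open>auto simp: abs_mult intro!: mult_left_le\<close>)
  have intqw_le: "(\<integral>y. \<bar>y\<bar> powr q * w y \<partial>\<eta>) \<le> B"
  proof -
    have "(\<integral>y. \<bar>y\<bar> powr q * w y \<partial>\<eta>) \<le> (\<integral>y. \<bar>y\<bar> powr q \<partial>\<eta>)"
      by (rule integral_mono[OF intqw intq]) (use w0 w1 in \<open>auto intro!: mult_left_le\<close>)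
    thus ?thesis using intqB by simp
  qed
  have CV: "CVaR p \<eta> = (\<integral>y. y * w y \<partial>\<eta>) / (1 - p)"
  proof -
    have pw: "y * w y = indicator {x<..} y * y + \<alpha> * x * indicator {x} y" for y
      by (simp add: w_def indicator_def algebra_simps)
    have i3: "integrable \<eta> (\<lambda>y. indicator {x<..} y * y)"
      using integrable_real_mult_indicator[of "{x<..}" \<eta> "\<lambda>y. y"] int1 by (simp add: mult.commute)
    have "(\<integral>y. y * w y \<partial>\<eta>) = (\<integral>y. indicator {x<..} y * y \<partial>\<eta>) + \<alpha> * x * P1"
      unfolding pw using i3 intI2 by (simp add: P1_def)
    also have "(\<integral>y. indicator {x<..} y * y \<partial>\<eta>) = (\<integral>y\<in>{x<..}. y \<partial>\<eta>)"
      by (simp add: set_lebesgue_integral_def)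
    finally have "(\<integral>y. y * w y \<partial>\<eta>) = (\<integral>y\<in>{x<..}. y \<partial>\<eta>) + a * x"
      using \<alpha>P by (simp add: algebra_simps)
    moreover have "CVaR p \<eta> = a/(1-p)*x + 1/(1-p)*(\<integral>y\<in>{x<..}. y \<partial>\<eta>)"
      unfolding CVaR_def x_def[symmetric] cdf_eq a_def by simp
    ultimately show ?thesis by (simp add: add_divide_distrib)
  qed

  have up_cv: "(\<integral>y. y * w y \<partial>\<eta>) \<le> C * (1-p) powr (1 - 1/q)"
  proof -
    have "(\<integral>y. y * w y \<partial>\<eta>) \<le> (\<integral>y. \<bar>y\<bar> * w y \<partial>\<eta>)"
      by (rule integral_mono[OF intyw intayw]) (use w0 in \<open>auto intro!: mult_right_mono\<close>)
    also have "\<dots> \<le> B powr (1/q) * (1-p) powr (1 - 1/q)"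
      by (rule young_int[OF q1 B0 _ intqw intayw intw w0 intqw_le intw_val]) (use p1 in simp)
    finally show ?thesis by (simp add: C_def)
  qed
  have pe: "(1-p) powr (1 - 1/q) = (1-p) * (1-p) powr (-1/q)"
    using powr_add[of "1-p" 1 "-1/q"] p1 by simp
  have CV_up: "CVaR p \<eta> \<le> C * (1-p) powr (-1/q)"
  proof -
    have "CVaR p \<eta> \<le> C * (1-p) powr (1 - 1/q) / (1 - p)"
      unfolding CV using up_cv p1 by (intro divide_right_mono) auto
    also have "\<dots> = C * (1-p) powr (-1/q)" using p1 by (simp add: pe)
    finally show ?thesis .
  qed
  have abs_le: "(\<integral>y. \<bar>y\<bar> \<partial>\<eta>) \<le> C"
  proof -
    have "(\<integral>y. \<bar>y\<bar> * (\<lambda>_. 1::real) y \<partial>\<eta>) \<le> B powr (1/q) * 1 powr (1 - 1/q)"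
    proof (rule young_int[where w="\<lambda>_. 1", OF q1 B0 zero_less_one])
      show "integrable \<eta> (\<lambda>y. \<bar>y\<bar> powr q * 1)" using intq by simp
      show "integrable \<eta> (\<lambda>y. \<bar>y\<bar> * 1)" using integrable_abs[OF int1] by simp
      show "integrable \<eta> (\<lambda>y. 1::real)" by simp
      show "0 \<le> (1::real)" for y :: real by simp
      show "(\<integral>y. \<bar>y\<bar> powr q * 1 \<partial>\<eta>) \<le> B" using intqB by simp
      show "(\<integral>y. 1 \<partial>\<eta>) = (1::real)" using prob_space by simp
    qed
    thus ?thesis by (simp add: C_def)
  qed
  have mean_lo: "(\<integral>y. y \<partial>\<eta>) \<ge> - C"
  proof -
    have "(\<integral>y. - \<bar>y\<bar> \<partial>\<eta>) \<le> (\<integral>y. y \<partial>\<eta>)"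
      by (rule integral_mono) (use int1 in auto)
    thus ?thesis using abs_le by simp
  qed
  have pwl: "y * w y \<ge> (1-p) * y + x * w y - x * (1-p)" for y
  proof -
    consider "y > x" | "y = x" | "y < x" by linarith
    thus ?thesis
    proof cases
      case 1
      hence "w y = 1" by (simp add: w_def)
      moreover have "p * (y - x) \<ge> 0" using 1 p0 by simp
      ultimately show ?thesis by (simp add: algebra_simps)
    next
      case 2 thus ?thesis by (simp add: algebra_simps)
    next
      case 3
      hence "w y = 0" by (simp add: w_def)
      moreover have "(1-p) * (x - y) \<ge> 0" using 3 p1 by simp
      ultimately show ?thesis by (simp add: algebra_simps)
    qed
  qed
  have lo_cv: "(\<integral>y. y * w y \<partial>\<eta>) \<ge> (1-p) * (\<integral>y. y \<partial>\<eta>)"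
  proof -
    have "(\<integral>y. (1-p) * y + x * w y - x * (1-p) \<partial>\<eta>) \<le> (\<integral>y. y * w y \<partial>\<eta>)"
      by (rule integral_mono[OF _ intyw]) (use int1 intw pwl in \<open>simp_all\<close>)
    moreover have "(\<integral>y. (1-p) * y + x * w y - x * (1-p) \<partial>\<eta>) = (1-p) * (\<integral>y. y \<partial>\<eta>)"
    proof -
      have "(\<integral>y. (1-p) * y + x * w y - x * (1-p) \<partial>\<eta>) = (1-p) * (\<integral>y. y \<partial>\<eta>) + x * (\<integral>y. w y \<partial>\<eta>) - x * (1-p)"
        using int1 intw prob_space by (simp add: integral_diff integral_add)
      thus ?thesis unfolding intw_val by simp
    qed
    ultimately show ?thesis by simp
  qed
  have CV_lo: "CVaR p \<eta> \<ge> - C"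
  proof -
    have "(\<integral>y. y \<partial>\<eta>) \<le> CVaR p \<eta>"
      unfolding CV using lo_cv p1 by (simp add: field_simps)
    thus ?thesis using mean_lo by simp
  qed
  show ?thesis
    using VaR_part CV_lo CV_up by (simp add: C_def q_def)
qed
end
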